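(* Let $(f_n)_{n\in\mathbb N}$ be a sequence of contractions (i.e. $\mathrm{Lip}(f_n,d)<1$) on a complete metric space $(\mathbb X,d)$ converging uniformly to some function $f:\mathbb X\to\mathbb X$, i.e. $\sup_{x\in\mathbb X}d(f_n(x),f(x))\to0$. Then the set $\{x_n:n\in\mathbb N\}$, where $x_n$ is the fixed point of $f_n$, is bounded.
   Context: $\mathrm{Lip}(f,d)=\sup_{x\ne y}d(f(x),f(y))/d(x,y)$. *)

theory Defs
  imports "HOL-Analysis.Analysis"
begin

text \<open>Lipschitz constant Lip(f,d) = sup over x \<noteq> y of d(f x, f y)/d(x,y),
  taken in the extended reals (so it may be +\<infinity>; it is -\<infinity> if the space has one point).\<close>
definition Lip :: "('a::metric_space \<Rightarrow> 'b::metric_space) \<Rightarrow> ereal" where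
  "Lip f = (SUP p \<in> {(x, y). x \<noteq> y}. ereal (dist (f (fst p)) (f (snd p)) / dist (fst p) (snd p)))"

end

theory Submission
  imports Defs
begin

lemma Lip_bound:
  fixes h :: "'a::metric_space \<Rightarrow> 'b::metric_space"
  assumes "Lip h < 1"
  obtains L where "0 \<le> L" "L < 1" "\<And>u v. dist (h u) (h v) \<le> L * dist u v"
proof -
  define L where "L = max 0 (real_of_ereal (Lip h))"
  have L1: "L < 1"
  proof (cases "Lip h")
    case (real r) then show ?thesis using assms by (simp add: L_def)
  qed (use assms in \<open>auto simp: L_def\<close>)
  have "dist (h u) (h v) \<le> L * dist u v" for u v
  proof (cases "u = v")
    case False
    hence le: "ereal (dist (h u) (h v) / dist u v) \<le> Lip h"
    proof -
      have "(u,v) \<in> {(x, y). x \<noteq> y}" using False by simp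
      from SUP_upper[OF this, of "\<lambda>p. ereal (dist (h (fst p)) (h (snd p)) / dist (fst p) (snd p))"]
      show ?thesis by (simp add: Lip_def)
    qed
    then obtain r where r: "Lip h = ereal r" using assms
      by (cases "Lip h") auto
    have "dist (h u) (h v) / dist u v \<le> L" using le r by (simp add: L_def)
    moreover have "dist u v > 0" using False by simp
    ultimately show ?thesis by (simp add: divide_le_eq mult.commute)
  qed simp
  moreover have "0 \<le> L" by (simp add: L_def)
  ultimately show ?thesis using that L1 by blast
qed

theorem mainTheorem5:
  fixes f :: "nat \<Rightarrow> 'a::complete_space \<Rightarrow> 'a"
    and g :: "'a \<Rightarrow> 'a"
    and x :: "nat \<Rightarrow> 'a"
  assumes contr: "\<And>n. Lip (f n) < 1"
    and unif: "uniform_limit UNIV f g sequentially"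
    and fixpt: "\<And>n. f n (x n) = x n"
  shows "bounded (range x)"
proof -
  have "\<forall>\<^sub>F n in sequentially. \<forall>y\<in>UNIV. dist (f n y) (g y) < 1/2"
    using unif unfolding uniform_limit_iff by (erule_tac x="1/2" in allE) simp
  then obtain N where N: "\<And>n y. n \<ge> N \<Longrightarrow> dist (f n y) (g y) < 1/2"
    unfolding eventually_sequentially by blast
  obtain L where L: "0 \<le> L" "L < 1" "\<And>u v. dist (f N u) (f N v) \<le> L * dist u v"
    using Lip_bound[OF contr[of N]] by blast
  have close: "dist (f N y) (f m y) < 1" if "m \<ge> N" for m y
  proof -
    have "dist (f N y) (f m y) \<le> dist (f N y) (g y) + dist (f m y) (g y)"
      by (rule dist_triangle2)
    also have "\<dots> < 1" using N[of N y] N[OF that, of y] by simp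
    finally show ?thesis .
  qed
  have sub: "x ` {N..} \<subseteq> cball (x N) (1 / (1 - L))"
  proof
    fix z assume "z \<in> x ` {N..}"
    then obtain m where m: "m \<ge> N" "z = x m" by auto
    have "dist (x N) (x m) = dist (f N (x N)) (f m (x m))" using fixpt by simp
    also have "\<dots> \<le> dist (f N (x N)) (f N (x m)) + dist (f N (x m)) (f m (x m))"
      by (rule dist_triangle)
    also have "\<dots> \<le> L * dist (x N) (x m) + 1"
      using L(3) close[OF m(1)] by (smt (verit))
    finally have "(1 - L) * dist (x N) (x m) \<le> 1" by (simp add: algebra_simps)
    hence "dist (x N) (x m) \<le> 1 / (1 - L)" using L(2)
      by (simp add: le_divide_eq mult.commute)
    thus "z \<in> cball (x N) (1 / (1 - L))" using m by simp
  qed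
  have "range x = x ` {..<N} \<union> x ` {N..}" proof -
    have "UNIV = {..<N} \<union> {N..}" by auto
    thus ?thesis by (metis image_Un)
  qed
  moreover have "bounded (x ` {..<N})" by (simp add: finite_imp_bounded)
  moreover have "bounded (x ` {N..})" using sub bounded_cball bounded_subset by blast
  ultimately show ?thesis by simp
qed

end
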